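(* Let $\mathcal A$ be a GDN superalgebra. Then for every integer $n\ge1$, $\mathcal A^n_L$ is an ideal of $\mathcal A$, and $(\mathcal A^2)^n\subseteq\mathcal A^{n+1}_L$.
   Context: A GDN superalgebra is a superalgebra $\mathcal A=\mathcal A_0\oplus\mathcal A_1$ over a field (product $\circ$, $\mathcal A_i\circ\mathcal A_j\subseteq\mathcal A_{i+j}$ mod 2, $|x|=i$ for nonzero $x\in\mathcal A_i$) satisfying for homogeneous $x,y,z$: $x\circ(y\circ z)-(x\circ y)\circ z=(-1)^{|x||y|}(y\circ(x\circ z)-(y\circ x)\circ z)$ and $(x\circ y)\circ z=(-1)^{|y||z|}(x\circ z)\circ y$. For subspaces $\mathcal V_i$, $[\mathcal V_1,\dots,\mathcal V_n]_L$ is the span of $((\cdots(x_1\circ x_2)\cdots)\circ x_n)$ with $x_i\in\mathcal V_i$, and $\mathcal A^n_L=[\mathcal A,\dots,\mathcal A]_L$ ($n$ copies). For a subspace $\mathcal V$, $\mathcal V^1=\mathcal V$ and $\mathcal V^n=\sum_{i=1}^{n-1}\mathcal V^i\circ\mathcal V^{n-i}$ (span of products); $\mathcal A^2=\mathcal A\circ\mathcal A$. *)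

theory Defs
  imports Complex_Main
begin

text \<open>Degrees are encoded as nats 0 and 1.\<close>

definition superalgebra ::
  "('k::field \<Rightarrow> 'a::ab_group_add \<Rightarrow> 'a) \<Rightarrow> (nat \<Rightarrow> 'a set) \<Rightarrow> ('a \<Rightarrow> 'a \<Rightarrow> 'a) \<Rightarrow> bool" where
  "superalgebra scale G mult \<longleftrightarrow>
     vector_space scale \<and>
     module.subspace scale (G 0) \<and> module.subspace scale (G 1) \<and>
     G 0 \<inter> G 1 = {0} \<and>
     (\<forall>x. \<exists>a\<in>G 0. \<exists>b\<in>G 1. x = a + b) \<and>
     (\<forall>x. Vector_Spaces.linear scale scale (mult x)) \<and>
     (\<forall>y. Vector_Spaces.linear scale scale (\<lambda>x. mult x y)) \<and>
     (\<forall>i<2. \<forall>j<2. \<forall>x\<in>G i. \<forall>y\<in>G j. mult x y \<in> G ((i + j) mod 2))"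

text \<open>GDN superalgebra: the two super-identities for homogeneous x, y, z
  (for x = 0 etc. they hold trivially by bilinearity, so we quantify over all elements
  of the homogeneous components).\<close>

definition gdn_superalgebra ::
  "('k::field \<Rightarrow> 'a::ab_group_add \<Rightarrow> 'a) \<Rightarrow> (nat \<Rightarrow> 'a set) \<Rightarrow> ('a \<Rightarrow> 'a \<Rightarrow> 'a) \<Rightarrow> bool" where
  "gdn_superalgebra scale G mult \<longleftrightarrow>
     superalgebra scale G mult \<and>
     (\<forall>i<2. \<forall>j<2. \<forall>k<2. \<forall>x\<in>G i. \<forall>y\<in>G j. \<forall>z\<in>G k.
        mult x (mult y z) - mult (mult x y) z
          = scale ((-1) ^ (i * j)) (mult y (mult x z) - mult (mult y x) z) \<and>
        mult (mult x y) z = scale ((-1) ^ (j * k)) (mult (mult x z) y))"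

definition lprod :: "('a \<Rightarrow> 'a \<Rightarrow> 'a) \<Rightarrow> 'a \<Rightarrow> 'a list \<Rightarrow> 'a" where
  "lprod mult x xs = foldl mult x xs"

definition left_power ::
  "('k::field \<Rightarrow> 'a::ab_group_add \<Rightarrow> 'a) \<Rightarrow> ('a \<Rightarrow> 'a \<Rightarrow> 'a) \<Rightarrow> nat \<Rightarrow> 'a set" where
  "left_power scale mult n =
     module.span scale {lprod mult x xs | x xs. length xs + 1 = n}"

definition prod_space ::
  "('k::field \<Rightarrow> 'a::ab_group_add \<Rightarrow> 'a) \<Rightarrow> ('a \<Rightarrow> 'a \<Rightarrow> 'a) \<Rightarrow> 'a set \<Rightarrow> 'a set \<Rightarrow> 'a set" where
  "prod_space scale mult V W = module.span scale {mult v w | v w. v \<in> V \<and> w \<in> W}"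

definition square_space ::
  "('k::field \<Rightarrow> 'a::ab_group_add \<Rightarrow> 'a) \<Rightarrow> ('a \<Rightarrow> 'a \<Rightarrow> 'a) \<Rightarrow> 'a set" where
  "square_space scale mult = prod_space scale mult UNIV UNIV"

text \<open>Powers of a subspace: V^1 = V, V^n = sum_{i=1}^{n-1} V^i o V^(n-i)
  (the span of all products a o b with a in V^i, b in V^(n-i), 1 \<le> i < n).
  V^0 is not used; it is set to {0}.\<close>

function sub_power ::
  "('k::field \<Rightarrow> 'a::ab_group_add \<Rightarrow> 'a) \<Rightarrow> ('a \<Rightarrow> 'a \<Rightarrow> 'a) \<Rightarrow> 'a set \<Rightarrow> nat \<Rightarrow> 'a set" where
  "sub_power scale mult V n =
     (if n = 0 then {0} else if n = 1 then V else
      module.span scale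
        (\<Union>i\<in>{1..<n}. {mult a b | a b.
             a \<in> sub_power scale mult V i \<and> b \<in> sub_power scale mult V (n - i)}))"
  by pat_completeness auto
termination
  by (relation "measure (\<lambda>(_, _, _, n). n)") auto

definition is_ideal ::
  "('k::field \<Rightarrow> 'a::ab_group_add \<Rightarrow> 'a) \<Rightarrow> ('a \<Rightarrow> 'a \<Rightarrow> 'a) \<Rightarrow> 'a set \<Rightarrow> bool" where
  "is_ideal scale mult I \<longleftrightarrow>
     module.subspace scale I \<and> (\<forall>a\<in>I. \<forall>x. mult a x \<in> I \<and> mult x a \<in> I)"

end

theory Submission
  imports Defs
begin

declare sub_power.simps[simp del]

locale gdn_loc = vector_space scale for scale :: "'k::field \<Rightarrow> 'a::ab_group_add \<Rightarrow> 'a" +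
  fixes G :: "nat \<Rightarrow> 'a set" and mult :: "'a \<Rightarrow> 'a \<Rightarrow> 'a"
  assumes gdn: "gdn_superalgebra scale G mult"
begin

lemma lin_r: "Vector_Spaces.linear scale scale (mult x)"
  using gdn by (simp add: gdn_superalgebra_def superalgebra_def)
lemma lin_l: "Vector_Spaces.linear scale scale (\<lambda>x. mult x y)"
  using gdn by (simp add: gdn_superalgebra_def superalgebra_def)
lemma decomp: "\<exists>a\<in>G 0. \<exists>b\<in>G 1. x = a + b"
  using gdn by (simp add: gdn_superalgebra_def superalgebra_def)
lemma grad: "i < 2 \<Longrightarrow> j < 2 \<Longrightarrow> x \<in> G i \<Longrightarrow> y \<in> G j \<Longrightarrow> mult x y \<in> G ((i + j) mod 2)"
  using gdn by (simp add: gdn_superalgebra_def superalgebra_def)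
lemma id1: "i < 2 \<Longrightarrow> j < 2 \<Longrightarrow> k < 2 \<Longrightarrow> x \<in> G i \<Longrightarrow> y \<in> G j \<Longrightarrow> z \<in> G k \<Longrightarrow>
   mult x (mult y z) - mult (mult x y) z
          = scale ((-1) ^ (i * j)) (mult y (mult x z) - mult (mult y x) z)"
  using gdn unfolding gdn_superalgebra_def by blast
lemma id2: "i < 2 \<Longrightarrow> j < 2 \<Longrightarrow> k < 2 \<Longrightarrow> x \<in> G i \<Longrightarrow> y \<in> G j \<Longrightarrow> z \<in> G k \<Longrightarrow>
   mult (mult x y) z = scale ((-1) ^ (j * k)) (mult (mult x z) y)"
  using gdn unfolding gdn_superalgebra_def by blast

lemma lin_span:
  assumes lf: "Vector_Spaces.linear scale scale f" and a: "a \<in> span S"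
    and S: "\<And>s. s \<in> S \<Longrightarrow> f s \<in> U" and U: "subspace U"
  shows "f a \<in> U"
proof -
  interpret lf: Vector_Spaces.linear scale scale f by (rule lf)
  have "subspace (f -` U)" using U lf.subspace_vimage by blast
  then have "span S \<subseteq> f -` U" using S by (intro span_minimal) auto
  then show ?thesis using a by auto
qed

lemma bil:
  assumes a: "a \<in> span S" and b: "b \<in> span T"
    and ST: "\<And>s t. s \<in> S \<Longrightarrow> t \<in> T \<Longrightarrow> mult s t \<in> U" and U: "subspace U"
  shows "mult a b \<in> U"
proof -
  have "(\<lambda>x. mult x b) a \<in> U"
  proof (rule lin_span[OF lin_l a _ U])
    fix s assume s: "s \<in> S"
    show "mult s b \<in> U" by (rule lin_span[OF lin_r b _ U]) (rule ST[OF s])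
  qed
  then show ?thesis by simp
qed

definition "H = {x. \<exists>i<2. x \<in> G i}"

lemma span_H: "x \<in> span H"
proof -
  obtain a b where "a \<in> G 0" "b \<in> G 1" "x = a + b" using decomp by blast
  moreover have "a \<in> H" unfolding H_def using \<open>a \<in> G 0\<close> zero_less_numeral by blast
  moreover have "b \<in> H" unfolding H_def using \<open>b \<in> G 1\<close> by (auto intro!: exI[of _ "1::nat"])
  ultimately show ?thesis by (metis span_add span_base)
qed

lemma hom_mult: "a \<in> H \<Longrightarrow> b \<in> H \<Longrightarrow> mult a b \<in> H"
proof -
  assume "a \<in> H" "b \<in> H"
  then obtain i j where "i < 2" "j < 2" "a \<in> G i" "b \<in> G j" unfolding H_def by blast
  then have "mult a b \<in> G ((i + j) mod 2)" by (rule grad)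
  moreover have "(i + j) mod 2 < (2::nat)" by simp
  ultimately show ?thesis unfolding H_def by blast
qed

lemma lprod_snoc: "lprod mult x (xs @ [z]) = mult (lprod mult x xs) z"
  by (simp add: lprod_def)
lemma lprod_Cons: "lprod mult x (y # xs) = lprod mult (mult x y) xs"
  by (simp add: lprod_def)
lemma lprod_Nil: "lprod mult x [] = x"
  by (simp add: lprod_def)

lemma lprod_H: "x \<in> H \<Longrightarrow> set xs \<subseteq> H \<Longrightarrow> lprod mult x xs \<in> H"
  by (induction xs arbitrary: x) (auto simp: lprod_Nil lprod_Cons hom_mult)

definition "HL n = {lprod mult x xs | x xs. x \<in> H \<and> set xs \<subseteq> H \<and> length xs + 1 = n}"

abbreviation "L n \<equiv> left_power scale mult n"

lemma L_eq: "L n = span {lprod mult x xs | x xs. length xs + 1 = n}"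
  by (simp add: left_power_def)

lemma subspace_L: "subspace (L n)"
  unfolding L_eq by simp

lemma gen_L: "length xs + 1 = n \<Longrightarrow> lprod mult x xs \<in> L n"
  unfolding L_eq by (rule span_base) blast

lemma HL_H: "s \<in> HL n \<Longrightarrow> s \<in> H"
  unfolding HL_def using lprod_H by blast

lemma HL_mult: "s \<in> HL m \<Longrightarrow> t \<in> H \<Longrightarrow> mult s t \<in> HL (Suc m)"
proof -
  assume "s \<in> HL m" "t \<in> H"
  then obtain x xs where "s = lprod mult x xs" "x \<in> H" "set xs \<subseteq> H" "length xs + 1 = m"
    unfolding HL_def by blast
  then show ?thesis unfolding HL_def using \<open>t \<in> H\<close>
    by (intro CollectI exI[of _ x] exI[of _ "xs @ [t]"]) (auto simp: lprod_snoc)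
qed

lemma H_HL1: "x \<in> H \<Longrightarrow> x \<in> HL 1"
  unfolding HL_def by (intro CollectI exI[of _ x] exI[of _ "[]"]) (auto simp: lprod_Nil)

lemma gen_HL: "lprod mult x xs \<in> span (HL (length xs + 1))"
proof (induction xs rule: rev_induct)
  case Nil
  have "span H \<subseteq> span (HL 1)" using H_HL1 by (intro span_mono) auto
  then show ?case using span_H by (auto simp: lprod_Nil)
next
  case (snoc z xs)
  have "mult (lprod mult x xs) z \<in> span (HL (Suc (length xs + 1)))"
    by (rule bil[OF snoc span_H]) (auto intro: span_base HL_mult)
  then show ?case by (simp add: lprod_snoc)
qed

lemma L_HL: "L n \<subseteq> span (HL n)"
  unfolding L_eq by (rule span_minimal) (auto intro: gen_HL[simplified])

lemma HL_L: "HL n \<subseteq> L n"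
  unfolding HL_def using gen_L by blast

lemma HL_split:
  assumes "s \<in> HL (Suc (Suc m))"
  shows "\<exists>u v. s = mult u v \<and> u \<in> HL (Suc m) \<and> v \<in> H"
proof -
  obtain x xs where xs: "s = lprod mult x xs" "x \<in> H" "set xs \<subseteq> H" "length xs = Suc m"
    using assms unfolding HL_def by auto
  then have "xs \<noteq> []" by auto
  then obtain ys v where ys: "xs = ys @ [v]" by (metis rev_exhaust)
  show ?thesis
    using xs ys unfolding HL_def
    by (intro exI[of _ "lprod mult x ys"] exI[of _ v]) (auto simp: lprod_snoc)
qed

lemma L_right: "a \<in> L n \<Longrightarrow> mult a z \<in> L (Suc n)"
proof -
  assume a: "a \<in> L n"
  have "(\<lambda>a. mult a z) a \<in> L (Suc n)"
  proof (rule lin_span[OF lin_l a[unfolded L_eq] _ subspace_L])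
    fix s assume "s \<in> {lprod mult x xs |x xs. length xs + 1 = n}"
    then obtain x xs where "s = lprod mult x xs" "length xs + 1 = n" by blast
    then show "mult s z \<in> L (Suc n)"
      using gen_L[of "xs @ [z]" "Suc n" x] by (simp add: lprod_snoc)
  qed
  then show ?thesis by simp
qed

lemma L_mono: "L (Suc (Suc m)) \<subseteq> L (Suc m)"
  unfolding L_eq[of "Suc (Suc m)"]
proof (rule span_minimal[OF _ subspace_L], clarify)
  fix x :: 'a and xs :: "'a list" assume "length xs + 1 = Suc (Suc m)"
  then obtain y ys where "xs = y # ys" "length ys + 1 = Suc m" by (cases xs) auto
  then show "lprod mult x xs \<in> L (Suc m)" using gen_L by (simp add: lprod_Cons)
qed

lemma L_mono': "1 \<le> n \<Longrightarrow> L (Suc n) \<subseteq> L n"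
  using L_mono[of "n - 1"] by simp

lemma L1: "x \<in> L 1"
  using gen_L[of "[]" 1 x] by (simp add: lprod_Nil)

lemma L_left_aux: "\<forall>y a. a \<in> L (Suc m) \<longrightarrow> mult y a \<in> L (Suc m)"
proof (induction m)
  case 0
  then show ?case using L1 by simp
next
  case (Suc m)
  show ?case
  proof (intro allI impI)
    fix y a assume a: "a \<in> L (Suc (Suc m))"
    show "mult y a \<in> L (Suc (Suc m))"
    proof (rule bil[OF span_H subsetD[OF L_HL a] _ subspace_L])
      fix t s assume t: "t \<in> H" and s: "s \<in> HL (Suc (Suc m))"
      obtain u v where uv: "s = mult u v" "u \<in> HL (Suc m)" "v \<in> H"
        using HL_split[OF s] by blast
      obtain i j k where ijk: "i < 2" "j < 2" "k < 2" "t \<in> G i" "u \<in> G j" "v \<in> G k"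
        using t uv HL_H unfolding H_def by blast
      have e: "mult t (mult u v) - mult (mult t u) v
          = scale ((-1) ^ (i * j)) (mult u (mult t v) - mult (mult u t) v)"
        by (rule id1[OF ijk])
      have uL: "u \<in> L (Suc m)" using uv HL_L by blast
      have tu: "mult t u \<in> L (Suc m)" using Suc.IH uL by blast
      have 1: "mult (mult t u) v \<in> L (Suc (Suc m))" by (rule L_right[OF tu])
      have 2: "mult u (mult t v) \<in> L (Suc (Suc m))" by (rule L_right[OF uL])
      have 3: "mult (mult u t) v \<in> L (Suc (Suc (Suc m)))" by (rule L_right[OF L_right[OF uL]])
      then have 3: "mult (mult u t) v \<in> L (Suc (Suc m))" using L_mono[of "Suc m"] by blast
      have 4: "scale ((-1) ^ (i * j)) (mult u (mult t v) - mult (mult u t) v) \<in> L (Suc (Suc m))"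
        by (rule subspace_scale[OF subspace_L subspace_diff[OF subspace_L 2 3]])
      have eq: "mult t (mult u v) = scale ((-1) ^ (i * j)) (mult u (mult t v) - mult (mult u t) v)
          + mult (mult t u) v"
        by (metis e diff_add_cancel)
      show "mult t s \<in> L (Suc (Suc m))"
        unfolding uv(1) eq by (rule subspace_add[OF subspace_L 4 1])
    qed
  qed
qed

lemma L_left: "1 \<le> n \<Longrightarrow> a \<in> L n \<Longrightarrow> mult y a \<in> L n"
  using L_left_aux[of "n - 1"] by simp

lemma prod_aux: "\<forall>q a b. 1 \<le> q \<longrightarrow> a \<in> L (Suc m) \<longrightarrow> b \<in> L q \<longrightarrow> mult a b \<in> L (m + q)"
proof (induction m)
  case 0
  then show ?case using L_left by simp
next
  case (Suc m)
  show ?case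
  proof (intro allI impI)
    fix q a b assume q: "1 \<le> q" and a: "a \<in> L (Suc (Suc m))" and b: "b \<in> L q"
    show "mult a b \<in> L (Suc m + q)"
    proof (rule bil[OF subsetD[OF L_HL a] subsetD[OF L_HL b] _ subspace_L])
      fix r s assume r: "r \<in> HL (Suc (Suc m))" and s: "s \<in> HL q"
      obtain u v where uv: "r = mult u v" "u \<in> HL (Suc m)" "v \<in> H"
        using HL_split[OF r] by blast
      obtain i j k where ijk: "i < 2" "j < 2" "k < 2" "u \<in> G i" "v \<in> G j" "s \<in> G k"
        using s uv HL_H unfolding H_def by blast
      have e: "mult (mult u v) s = scale ((-1) ^ (j * k)) (mult (mult u s) v)"
        by (rule id2[OF ijk])
      have uL: "u \<in> L (Suc m)" using uv(2) HL_L by blast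
      have sL: "s \<in> L q" using s HL_L by blast
      have "mult u s \<in> L (m + q)"
        using Suc.IH q uL sL by blast
      then have "mult (mult u s) v \<in> L (Suc (m + q))" by (rule L_right)
      then have "scale ((-1) ^ (j * k)) (mult (mult u s) v) \<in> L (Suc m + q)"
        by (simp add: subspace_scale[OF subspace_L])
      then show "mult r s \<in> L (Suc m + q)"
        unfolding uv(1) e .
    qed
  qed
qed

lemma prod_L: "1 \<le> p \<Longrightarrow> 1 \<le> q \<Longrightarrow> a \<in> L p \<Longrightarrow> b \<in> L q \<Longrightarrow> mult a b \<in> L (p + q - 1)"
proof -
  assume p: "1 \<le> p" and q: "1 \<le> q" and a: "a \<in> L p" and b: "b \<in> L q"
  have ps: "p = Suc (p - 1)" using p by simp
  have "mult a b \<in> L (p - 1 + q)" using prod_aux[of "p - 1"] q a b ps by metis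
  moreover have "p - 1 + q = p + q - 1" using p by simp
  ultimately show ?thesis by simp
qed

lemma sp_1: "sub_power scale mult V 1 = V"
  by (subst sub_power.simps) (simp del: sub_power.simps)

lemma sp_n: "2 \<le> n \<Longrightarrow> sub_power scale mult V n = span
        (\<Union>i\<in>{1..<n}. {mult a b | a b.
             a \<in> sub_power scale mult V i \<and> b \<in> sub_power scale mult V (n - i)})"
  by (subst sub_power.simps) (simp del: sub_power.simps)

lemma sp_L: "1 \<le> n \<Longrightarrow> sub_power scale mult (square_space scale mult) n \<subseteq> L (n + 1)"
proof (induction n rule: less_induct)
  case (less n)
  show ?case
  proof (cases "n = 1")
    case True
    show ?thesis unfolding True sp_1 square_space_def prod_space_def
    proof (rule span_minimal[OF _ subspace_L], clarify)
      fix v w show "mult v w \<in> L (1 + 1)" using gen_L[of "[w]" "1 + 1" v] by (simp add: lprod_Cons lprod_Nil)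
    qed
  next
    case False
    then have n2: "2 \<le> n" using less.prems by simp
    show ?thesis unfolding sp_n[OF n2]
    proof (rule span_minimal[OF _ subspace_L], clarify)
      fix i a b assume i: "i \<in> {1..<n}"
        and a: "a \<in> sub_power scale mult (square_space scale mult) i"
        and b: "b \<in> sub_power scale mult (square_space scale mult) (n - i)"
      have aL: "a \<in> L (i + 1)" using less.IH[of i] i a by auto
      have ni: "n - i < n" "1 \<le> n - i" using i by auto
      have bL: "b \<in> L (n - i + 1)" using less.IH[OF ni] b by blast
      have "mult a b \<in> L ((i + 1) + (n - i + 1) - 1)" by (rule prod_L[OF _ _ aL bL]) auto
      moreover have "(i + 1) + (n - i + 1) - 1 = n + 1" using i by auto
      ultimately show "mult a b \<in> L (n + 1)" by simp
    qed
  qed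
qed

end

theorem lemma4p2:
  fixes scale :: "'k::field \<Rightarrow> 'a::ab_group_add \<Rightarrow> 'a"
    and G :: "nat \<Rightarrow> 'a set"
    and mult :: "'a \<Rightarrow> 'a \<Rightarrow> 'a"
    and n :: nat
  assumes "gdn_superalgebra scale G mult"
    and "n \<ge> 1"
  shows "is_ideal scale mult (left_power scale mult n) \<and>
         sub_power scale mult (square_space scale mult) n \<subseteq> left_power scale mult (n + 1)"
proof -
  have vs: "vector_space scale"
    using assms(1) by (simp add: gdn_superalgebra_def superalgebra_def)
  interpret g: gdn_loc scale G mult
    by (rule gdn_loc.intro[OF vs]) (unfold_locales, rule assms(1))
  show ?thesis
    unfolding is_ideal_def
    using g.subspace_L g.L_left[OF assms(2)] g.sp_L[OF assms(2)]
      g.L_right g.L_mono'[OF assms(2)] by blast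
qed

end
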